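(* Let $\Gamma\subset\mathbb{C}^*$ be a subgroup with the accumulation property, i.e. either $\Gamma$ contains an element $q$ with $|q|\ne1$, or $\Gamma$ contains a sequence $\gamma_n\to1$ in $\mathbb{C}^*$ with $\gamma_n\ne1$. Let $\widetilde\psi:\mathbb{C}^*\to\mathbb{C}^*$ be holomorphic and $\sigma:\Gamma\to\Gamma$ a group homomorphism with $\widetilde\psi(\gamma z)=\sigma(\gamma)\widetilde\psi(z)$ for all $\gamma\in\Gamma$, $z\in\mathbb{C}^*$. Then there exist $a\in\mathbb{C}^*$ and $n\in\mathbb{Z}$ such that $\widetilde\psi(z)=az^n$ and $\sigma(\gamma)=\gamma^n$ for all $\gamma\in\Gamma$. *)

theory Defs
  imports "HOL-Complex_Analysis.Complex_Analysis"
begin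

definition subgroup_Cstar :: "complex set \<Rightarrow> bool" where
  "subgroup_Cstar G \<longleftrightarrow> 1 \<in> G \<and> 0 \<notin> G \<and>
     (\<forall>x\<in>G. \<forall>y\<in>G. x * y \<in> G) \<and> (\<forall>x\<in>G. inverse x \<in> G)"

definition accumulation_property :: "complex set \<Rightarrow> bool" where
  "accumulation_property G \<longleftrightarrow>
     (\<exists>q\<in>G. norm q \<noteq> 1) \<or>
     (\<exists>g::nat \<Rightarrow> complex. (\<forall>n. g n \<in> G \<and> g n \<noteq> 1) \<and> g \<longlonglongrightarrow> 1)"

end

theory Submission
  imports Defs
begin

lemma exp_int_mult: "exp (of_int k * (z::complex)) = exp z powi k"
proof (cases "k \<ge> 0")
  case True
  then obtain n where "k = int n" by (metis nonneg_eq_int)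
  then show ?thesis by (simp add: exp_of_nat_mult power_int_of_nat)
next
  case False
  then obtain n where "k = - int n" by (metis le_cases neg_0_le_iff_le nonneg_eq_int add.inverse_inverse)
  then show ?thesis
    by (simp add: exp_minus exp_of_nat_mult power_int_minus)
qed

lemma sg_pow: assumes "subgroup_Cstar G" "q \<in> G" shows "q ^ n \<in> G"
  using assms by (induction n) (auto simp: subgroup_Cstar_def)

lemma sg_powi: assumes "subgroup_Cstar G" "q \<in> G" shows "q powi k \<in> G"
proof (cases "k \<ge> 0")
  case True
  then obtain n where "k = int n" by (metis nonneg_eq_int)
  then show ?thesis using sg_pow[OF assms] by (simp add: power_int_of_nat)
next
  case False
  then obtain n where "k = - int n" by (metis le_cases neg_0_le_iff_le nonneg_eq_int add.inverse_inverse)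
  then show ?thesis using sg_pow[OF assms, of n] assms(1)
    by (simp add: power_int_minus subgroup_Cstar_def)
qed

theorem mainTheorem7:
  fixes \<Gamma> :: "complex set" and \<psi> \<sigma> :: "complex \<Rightarrow> complex"
  assumes "subgroup_Cstar \<Gamma>"
    and "accumulation_property \<Gamma>"
    and "\<psi> holomorphic_on (- {0})"
    and "\<And>z. z \<noteq> 0 \<Longrightarrow> \<psi> z \<noteq> 0"
    and "\<And>\<gamma>. \<gamma> \<in> \<Gamma> \<Longrightarrow> \<sigma> \<gamma> \<in> \<Gamma>"
    and "\<And>\<gamma> \<delta>. \<gamma> \<in> \<Gamma> \<Longrightarrow> \<delta> \<in> \<Gamma> \<Longrightarrow> \<sigma> (\<gamma> * \<delta>) = \<sigma> \<gamma> * \<sigma> \<delta>"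
    and "\<And>\<gamma> z. \<gamma> \<in> \<Gamma> \<Longrightarrow> z \<noteq> 0 \<Longrightarrow> \<psi> (\<gamma> * z) = \<sigma> \<gamma> * \<psi> z"
  shows "\<exists>a::complex. \<exists>n::int. a \<noteq> 0 \<and>
           (\<forall>z. z \<noteq> 0 \<longrightarrow> \<psi> z = a * z powi n) \<and>
           (\<forall>\<gamma>\<in>\<Gamma>. \<sigma> \<gamma> = \<gamma> powi n)"
proof -
  note sg = assms(1)[unfolded subgroup_Cstar_def]
  have sig0: "\<sigma> \<gamma> \<noteq> 0" if "\<gamma> \<in> \<Gamma>" for \<gamma> using assms(5)[OF that] sg by auto
  have Fhol: "(\<lambda>w. \<psi> (exp w)) holomorphic_on UNIV"
    by (rule holomorphic_on_compose_gen[of exp UNIV \<psi> "- {0}", unfolded o_def])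
       (auto intro: holomorphic_intros assms(3))
  obtain G where Ghol: "G holomorphic_on UNIV" and Gexp: "\<And>w. exp (G w) = \<psi> (exp w)"
    using holomorphic_logarithm_exists[OF convex_UNIV open_UNIV Fhol, of 0] assms(4) by auto
  define D where "D = deriv G"
  have DG: "(G has_field_derivative D w) (at w)" for w
    unfolding D_def by (rule holomorphic_derivI[OF Ghol open_UNIV]) auto
  have Dhol: "D holomorphic_on UNIV"
    unfolding D_def by (rule holomorphic_deriv[OF Ghol open_UNIV])
  define L where "L = {l. exp l \<in> \<Gamma>}"
  have per: "D (w + l) = D w" if "l \<in> L" for w l
  proof -
    define \<gamma> where "\<gamma> = exp l"
    have g: "\<gamma> \<in> \<Gamma>" using that by (simp add: L_def \<gamma>_def)
    have eq: "(\<lambda>w. exp (G (w + l))) = (\<lambda>w. \<sigma> \<gamma> * exp (G w))"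
    proof
      fix w
      have "exp (G (w + l)) = \<psi> (\<gamma> * exp w)" by (simp add: Gexp \<gamma>_def exp_add mult.commute)
      also have "\<dots> = \<sigma> \<gamma> * \<psi> (exp w)" using assms(7)[OF g] by simp
      finally show "exp (G (w + l)) = \<sigma> \<gamma> * exp (G w)" by (simp add: Gexp)
    qed
    have d1: "((\<lambda>w. exp (G (w + l))) has_field_derivative exp (G (w + l)) * D (w + l)) (at w)"
    proof -
      have "((\<lambda>w. G (w + l)) has_field_derivative D (w + l)) (at w)"
      proof -
        have "((\<lambda>w. w + l) has_field_derivative 1) (at w)" by (auto intro!: derivative_eq_intros)
        from DERIV_chain2[where f=G and g="\<lambda>w. w + l", OF _ this] DG[of "w + l"]
        show ?thesis by simp
      qed
      then show ?thesis by (auto intro!: derivative_eq_intros)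
    qed
    have d2: "((\<lambda>w. \<sigma> \<gamma> * exp (G w)) has_field_derivative \<sigma> \<gamma> * (exp (G w) * D w)) (at w)"
      using DG[of w] by (auto intro!: derivative_eq_intros)
    have "exp (G (w + l)) * D (w + l) = \<sigma> \<gamma> * (exp (G w) * D w)"
      using DERIV_unique[OF d1, of "\<sigma> \<gamma> * (exp (G w) * D w)"] d2 eq by simp
    moreover have "exp (G (w + l)) = \<sigma> \<gamma> * exp (G w)" using fun_cong[OF eq, of w] by simp
    ultimately show ?thesis using sig0[OF g] by simp
  qed
  have Dshift: "D w = D (w - x)" if "x \<in> L" for w x using per[OF that, of "w - x"] by simp
  have Dconst: "\<exists>c. \<forall>w. D w = c"
  proof (cases "\<exists>q\<in>\<Gamma>. norm q \<noteq> 1")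
    case True
    then obtain q where q: "q \<in> \<Gamma>" "norm q \<noteq> 1" by blast
    have q0: "q \<noteq> 0" using q sg by auto
    define l where "l = Ln q"
    define r where "r = Re l"
    have r0: "r \<noteq> 0" using q q0 by (simp add: r_def l_def)
    define R where "R = \<bar>r\<bar> + 2 * pi"
    have Lmem: "of_int k * l + of_int m * (2 * of_real pi * \<i>) \<in> L" for k m
    proof -
      have "exp (of_int k * l + of_int m * (2 * of_real pi * \<i>)) = q powi k"
        by (simp add: exp_add exp_int_mult l_def q0 del: exp_two_pi_i')
      then show ?thesis using sg_powi[OF assms(1) q(1)] by (simp add: L_def)
    qed
    have "D w \<in> D ` cball 0 R" for w
    proof -
      define k where "k = \<lfloor>Re w / r\<rfloor>"
      define w1 where "w1 = w - of_int k * l"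
      define m where "m = \<lfloor>Im w1 / (2 * pi)\<rfloor>"
      define w2 where "w2 = w - (of_int k * l + of_int m * (2 * of_real pi * \<i>))"
      have "D w = D w2" unfolding w2_def by (rule Dshift[OF Lmem])
      have re: "Re w2 = Re w - of_int k * r" by (simp add: w2_def r_def)
      have im: "Im w2 = Im w1 - of_int m * (2 * pi)" by (simp add: w2_def w1_def)
      have "\<bar>Re w2\<bar> \<le> \<bar>r\<bar>"
      proof -
        define t where "t = Re w / r"
        have "(t - of_int k) * r = Re w - of_int k * r" using r0 by (simp add: t_def algebra_simps)
        then have "Re w2 = (t - of_int k) * r" using re by simp
        moreover have "0 \<le> t - of_int k" "t - of_int k \<le> 1" unfolding k_def t_def
          by linarith+ 
        ultimately show ?thesis
          by (simp add: abs_mult) (metis abs_ge_zero mult_left_le_one_le mult.commute diff_ge_0_iff_ge)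
      qed
      moreover have "\<bar>Im w2\<bar> \<le> 2 * pi"
      proof -
        define t where "t = Im w1 / (2 * pi)"
        have "(t - of_int m) * (2 * pi) = Im w1 - of_int m * (2 * pi)" by (simp add: t_def algebra_simps)
        then have "Im w2 = (t - of_int m) * (2 * pi)" using im by simp
        moreover have "0 \<le> t - of_int m" "t - of_int m \<le> 1" unfolding m_def t_def
          by linarith+
        ultimately show ?thesis by (simp add: abs_mult)
      qed
      ultimately have "w2 \<in> cball 0 R" using cmod_le[of w2] by (simp add: R_def)
      then show ?thesis using \<open>D w = D w2\<close> by blast
    qed
    then have "range D \<subseteq> D ` cball 0 R" by blast
    moreover have "bounded (D ` cball 0 R)"
      by (intro compact_imp_bounded compact_continuous_image
          continuous_on_subset[OF holomorphic_on_imp_continuous_on[OF Dhol]]) auto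
    ultimately have "bounded (range D)" using bounded_subset by blast
    then have "D constant_on UNIV" by (rule Liouville_theorem[OF Dhol])
    then show ?thesis unfolding constant_on_def by blast
  next
    case False
    then obtain g where g: "\<And>n. g n \<in> \<Gamma>" "\<And>n. g n \<noteq> 1" "g \<longlonglongrightarrow> 1"
      using assms(2) unfolding accumulation_property_def by blast
    define lam where "lam = (\<lambda>n. Ln (g n))"
    have g0: "g n \<noteq> 0" for n using g(1)[of n] sg by auto
    have lim: "lam \<longlonglongrightarrow> 0"
      using tendsto_Ln[OF g(3)] by (simp add: lam_def)
    have lamL: "lam n \<in> L" for n using g(1) g0 by (simp add: L_def lam_def)
    have lam0: "lam n \<noteq> 0" for n using g(2)[of n] g0[of n] exp_Ln[OF g0[of n]] by (metis exp_zero lam_def)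
    have Dl: "D (lam n) = D 0" for n using per[OF lamL[of n], of 0] by simp
    have lp: "0 islimpt range lam"
      unfolding islimpt_sequential using lim lam0 by (intro exI[of _ lam]) auto
    have "D w - D 0 = 0" for w
      by (rule analytic_continuation[of "\<lambda>w. D w - D 0" UNIV "range lam" 0 w])
         (use Dl lp in \<open>auto intro!: holomorphic_intros Dhol\<close>)
    then show ?thesis by auto
  qed
  then obtain c where c: "\<And>w. D w = c" by blast
  obtain b where b: "\<And>w. G w - c * w = b"
    using has_field_derivative_zero_constant[OF convex_UNIV, of "\<lambda>w. G w - c * w"]
    using DG c by (metis (no_types) UNIV_I DERIV_diff DERIV_cmult_Id has_field_derivative_at_within diff_self)
  have Gf: "G w = of_int n * w + b" if "c = of_int n" for n w using b[of w] that by (simp add: algebra_simps)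
  have "exp (c * (2 * pi * \<i>) + b) = exp b"
  proof -
    have "exp (G (2 * pi * \<i>)) = exp (G 0)" by (simp add: Gexp)
    then show ?thesis using b[of "2 * pi * \<i>"] b[of 0] by (simp add: algebra_simps)
  qed
  then have "exp (c * (2 * pi * \<i>)) = 1" by (simp add: exp_add)
  then obtain n :: int where "Re (c * (2 * pi * \<i>)) = 0" "Im (c * (2 * pi * \<i>)) = of_int (2 * n) * pi"
    unfolding exp_eq_1 by blast
  then have "c = of_int n" by (intro complex_eqI) auto
  note G = Gf[OF this]
  have psi: "\<psi> z = exp b * z powi n" if "z \<noteq> 0" for z
  proof -
    have "\<psi> z = exp (G (Ln z))" using that by (simp add: Gexp)
    also have "\<dots> = exp b * exp (Ln z) powi n" by (simp add: G exp_add exp_int_mult mult.commute)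
    finally show ?thesis using that by simp
  qed
  show ?thesis
  proof (intro exI conjI ballI allI impI)
    show "exp b \<noteq> 0" by simp
    show "\<psi> z = exp b * z powi n" if "z \<noteq> 0" for z using psi that .
    fix g assume g: "g \<in> \<Gamma>"
    then have "g \<noteq> 0" using sg by auto
    have "\<psi> (g * 1) = \<sigma> g * \<psi> 1" using assms(7)[OF g, of 1] by simp
    then show "\<sigma> g = g powi n" using psi[OF \<open>g \<noteq> 0\<close>] psi[of 1] by simp
  qed
qed

end
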